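(* Let $\lambda\in\mathbb{R}$, let $n$ be a positive integer and let $k$ be a positive integer. Then \[ S_{k,\lambda}(n)=\frac{(n)_{k+1,\lambda}}{k+1}+\frac{1}{k+1}\sum_{r=0}^{k-1}\binom{k+1}{r}(-1)^{k+1-r}\langle 1\rangle_{k+1-r,\lambda}\,S_{r,\lambda}(n). \]
   Context: For $\lambda\in\mathbb{R}$ the degenerate falling factorials are $(x)_{0,\lambda}=1$ and $(x)_{m,\lambda}=x(x-\lambda)\cdots(x-(m-1)\lambda)$ for $m\ge 1$, and the degenerate rising factorials are $\langle x\rangle_{0,\lambda}=1$ and $\langle x\rangle_{m,\lambda}=x(x+\lambda)(x+2\lambda)\cdots(x+(m-1)\lambda)$ for $m\ge1$. For a nonnegative integer $r$ and positive integer $n$, $S_{r,\lambda}(n)=\sum_{j=1}^{n}(j)_{r,\lambda}$ (so in particular $S_{0,\lambda}(n)=n$). *)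

theory Defs
  imports Complex_Main
begin

definition dfall :: "real \<Rightarrow> nat \<Rightarrow> real \<Rightarrow> real" where
  "dfall lam m x = (\<Prod>i<m. x - real i * lam)"

definition drise :: "real \<Rightarrow> nat \<Rightarrow> real \<Rightarrow> real" where
  "drise lam m x = (\<Prod>i<m. x + real i * lam)"

definition Sdeg :: "real \<Rightarrow> nat \<Rightarrow> nat \<Rightarrow> real" where
  "Sdeg lam r n = (\<Sum>j=1..n. dfall lam r (real j))"

end

theory Submission imports Defs begin

lemma dfall_Suc: "dfall l (Suc m) x = dfall l m x * (x - real m * l)"
  by (simp add: dfall_def)

lemma dfall_binom:
  "dfall l m (x+y) = (\<Sum>r\<le>m. real (m choose r) * dfall l r x * dfall l (m-r) y)"
proof (induction m)
  case 0
  then show ?case by (simp add: dfall_def)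
next
  case (Suc m)
  let ?A = "\<lambda>r. dfall l r x" and ?B = "\<lambda>r. dfall l r y"
  have L: "dfall l (Suc m) (x+y) = (\<Sum>r\<le>m. real (m choose r) * ?A (Suc r) * ?B (m-r))
       + (\<Sum>r\<le>m. real (m choose r) * ?A r * ?B (Suc m - r))"
  proof -
    have "dfall l (Suc m) (x+y) = (\<Sum>r\<le>m. real (m choose r) * ?A r * ?B (m-r) * ((x - real r * l) + (y - real (m-r) * l)))"
      unfolding dfall_Suc Suc.IH sum_distrib_right
      by (intro sum.cong) (auto simp: algebra_simps)
    also have "\<dots> = (\<Sum>r\<le>m. real (m choose r) * ?A (Suc r) * ?B (m-r) + real (m choose r) * ?A r * ?B (Suc m - r))"
      by (intro sum.cong refl) (simp add: dfall_Suc Suc_diff_le algebra_simps)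
    finally show ?thesis by (simp add: sum.distrib)
  qed
  have R: "(\<Sum>r\<le>Suc m. real (Suc m choose r) * ?A r * ?B (Suc m - r))
     = ?B (Suc m) + (\<Sum>r\<le>m. real (m choose r) * ?A (Suc r) * ?B (m-r))
         + (\<Sum>r\<le>m. real (m choose Suc r) * ?A (Suc r) * ?B (m-r))"
  proof -
    have "(\<Sum>r\<le>Suc m. real (Suc m choose r) * ?A r * ?B (Suc m - r))
       = ?B (Suc m) + (\<Sum>r\<le>m. real (Suc m choose Suc r) * ?A (Suc r) * ?B (m-r))"
      by (subst sum.atMost_Suc_shift) (simp add: dfall_def)
    also have "(\<Sum>r\<le>m. real (Suc m choose Suc r) * ?A (Suc r) * ?B (m-r))
       = (\<Sum>r\<le>m. real (m choose r) * ?A (Suc r) * ?B (m-r) + real (m choose Suc r) * ?A (Suc r) * ?B (m-r))"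
      by (intro sum.cong refl) (simp add: algebra_simps)
    finally show ?thesis by (simp add: sum.distrib)
  qed
  have T: "(\<Sum>r\<le>m. real (m choose Suc r) * ?A (Suc r) * ?B (m-r))
     = (\<Sum>r\<le>m. real (m choose r) * ?A r * ?B (Suc m - r)) - ?B (Suc m)"
  proof -
    have "(\<Sum>r\<le>Suc m. real (m choose r) * ?A r * ?B (Suc m - r)) = ?B (Suc m) + (\<Sum>r\<le>m. real (m choose Suc r) * ?A (Suc r) * ?B (m-r))"
      by (subst sum.atMost_Suc_shift) (simp add: dfall_def)
    moreover have "(\<Sum>r\<le>Suc m. real (m choose r) * ?A r * ?B (Suc m - r)) = (\<Sum>r\<le>m. real (m choose r) * ?A r * ?B (Suc m - r))"
      by simp
    ultimately show ?thesis by linarith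
  qed
  show ?case using L R T by linarith
qed

lemma dfall_neg1: "dfall l m (-1) = (-1)^m * drise l m 1"
  by (induction m) (simp_all add: dfall_def drise_def algebra_simps)

lemma dfall_zero: "m \<ge> 1 \<Longrightarrow> dfall l m 0 = 0"
  unfolding dfall_def by (rule prod_zero) auto

lemma step:
  fixes x :: real and k :: nat assumes "k \<ge> 1"
  shows "real (k+1) * dfall l k x = dfall l (k+1) x - dfall l (k+1) (x-1)
    + (\<Sum>r=0..k-1. real ((k+1) choose r) * (-1) ^ (k+1-r) * drise l (k+1-r) 1 * dfall l r x)"
proof -
  have "dfall l (k+1) (x-1) = (\<Sum>r\<le>k+1. real ((k+1) choose r) * dfall l r x * dfall l (k+1-r) (-1))"
    using dfall_binom[of l "k+1" x "-1"] by simp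
  also have "\<dots> = (\<Sum>r\<le>k+1. real ((k+1) choose r) * (-1) ^ (k+1-r) * drise l (k+1-r) 1 * dfall l r x)"
    by (intro sum.cong refl) (simp add: dfall_neg1)
  also have "\<dots> = (\<Sum>r=0..k-1. real ((k+1) choose r) * (-1) ^ (k+1-r) * drise l (k+1-r) 1 * dfall l r x)
     - real (k+1) * dfall l k x + dfall l (k+1) x"
  proof -
    have e: "{..k+1} = insert (k+1) (insert k {0..k-1})" using assms by auto
    show ?thesis unfolding e using assms
      by (simp add: drise_def Suc_diff_le algebra_simps)
  qed
  finally show ?thesis by simp
qed

lemma main_sum:
  fixes k :: nat assumes "k \<ge> 1"
  shows "real (k+1) * Sdeg l k n = dfall l (k+1) (real n)
    + (\<Sum>r=0..k-1. real ((k+1) choose r) * (-1) ^ (k+1-r) * drise l (k+1-r) 1 * Sdeg l r n)"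
proof (induction n)
  case 0
  then show ?case by (simp add: Sdeg_def dfall_zero)
next
  case (Suc n)
  have S: "Sdeg l r (Suc n) = Sdeg l r n + dfall l r (real (Suc n))" for r
    by (simp add: Sdeg_def)
  have st: "real (k+1) * dfall l k (real (Suc n)) = dfall l (k+1) (real (Suc n)) - dfall l (k+1) (real n)
    + (\<Sum>r=0..k-1. real ((k+1) choose r) * (-1) ^ (k+1-r) * drise l (k+1-r) 1 * dfall l r (real (Suc n)))"
    using step[OF assms, of l "real (Suc n)"] by simp
  show ?case unfolding S using Suc.IH st
    by (simp add: algebra_simps sum.distrib)
qed

theorem theorem2p4:
  fixes lam :: real and n k :: nat
  assumes "n \<ge> 1" and "k \<ge> 1"
  shows "Sdeg lam k n =
    dfall lam (k+1) (real n) / real (k+1)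
    + (1 / real (k+1)) * (\<Sum>r=0..k-1. real ((k+1) choose r) * (-1) ^ (k+1-r)
          * drise lam (k+1-r) 1 * Sdeg lam r n)"
proof -
  let ?S = "\<Sum>r=0..k-1. real ((k+1) choose r) * (-1) ^ (k+1-r) * drise lam (k+1-r) 1 * Sdeg lam r n"
  have e: "real (k+1) * Sdeg lam k n = dfall lam (k+1) (real n) + ?S"
    using main_sum[OF assms(2), of lam n] .
  have "Sdeg lam k n = (dfall lam (k+1) (real n) + ?S) / real (k+1)"
    by (subst e[symmetric]) simp
  then show ?thesis by (simp add: add_divide_distrib)
qed

end
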